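(* Let $\alpha\in(\tfrac12,1)$, $x'\in\mathbb{R}^d$, and let $f:\mathbb{R}^d\to\mathbb{R}$ be differentiable with $\nabla f$ $\alpha$-Hölder continuous. Then $$\sup_{r>0}\frac{1}{r^{2\alpha}}\inf_{B,b}\big\|\nabla f-B_{x'}\big\|_{B_r(x')}\le C\sup_{l>0}\frac{1}{l^{2\alpha}}\sup_{|y|\le l}\inf_{k\in\mathbb{R}^d}\big\|\nabla\delta_yf-k\big\|_{B_l(x')},$$ where the infimum on the left is over symmetric $B\in\mathbb{R}^{d\times d}$ and $b\in\mathbb{R}^d$, $B_{x'}(x):=B(x-x')+b$, and $C$ depends only on $d$ and $\alpha$.
   Context: $\delta_yf(x):=f(x+y)-f(x)$ (applied entrywise to vector fields). $\|\cdot\|_{B_r(x')}$ denotes the supremum norm over the ball $B_r(x')$ (for vector-valued functions, of the Euclidean norm). *)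

theory Defs
  imports "HOL-Analysis.Analysis"
begin

definition delta :: "'a::ab_group_add \<Rightarrow> ('a \<Rightarrow> 'b::ab_group_add) \<Rightarrow> 'a \<Rightarrow> 'b" where
  "delta y f x = f (x + y) - f x"

definition supnorm_ball :: "('a::metric_space \<Rightarrow> 'b::real_normed_vector) \<Rightarrow> 'a \<Rightarrow> real \<Rightarrow> ennreal" where
  "supnorm_ball h x0 r = (SUP z\<in>ball x0 r. ennreal (norm (h z)))"

definition holder_continuous :: "real \<Rightarrow> ('a::real_normed_vector \<Rightarrow> 'b::real_normed_vector) \<Rightarrow> bool" where
  "holder_continuous \<alpha> g \<longleftrightarrow> (\<exists>M. \<forall>x y. norm (g x - g y) \<le> M * norm (x - y) powr \<alpha>)"

end

theory Submission
  imports Defs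
begin

lemma cauchy_real:
  fixes \<psi> :: "real \<Rightarrow> 'b::real_normed_vector"
  assumes add: "\<And>s t. \<psi> (s + t) = \<psi> s + \<psi> t"
    and cont: "continuous_on UNIV \<psi>"
  shows "\<psi> t = t *\<^sub>R \<psi> 1"
proof -
  define \<phi> where "\<phi> t = \<psi> t - t *\<^sub>R \<psi> 1" for t
  have addp: "\<phi> (s + t) = \<phi> s + \<phi> t" for s t
    by (simp add: \<phi>_def add scaleR_add_left)
  have p0: "\<phi> 0 = 0" using addp[of 0 0] by simp
  have pneg: "\<phi> (- t) = - \<phi> t" for t
    using addp[of t "-t"] p0 by (metis add.commute eq_neg_iff_add_eq_0 add.right_inverse)
  have pnat: "\<phi> (of_nat n * t) = of_nat n *\<^sub>R \<phi> t" for n t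
    by (induction n) (auto simp: p0 addp distrib_right scaleR_add_left)
  have pint: "\<phi> (of_int m * t) = of_int m *\<^sub>R \<phi> t" for m t
  proof (cases "m \<ge> 0")
    case True then show ?thesis using pnat[of "nat m" t] by simp
  next
    case False
    then have "of_int m * t = - (of_nat (nat (-m)) * t)" by simp
    then show ?thesis using pnat[of "nat (-m)" t] pneg False by simp
  qed
  have p1: "\<phi> 1 = 0" by (simp add: \<phi>_def)
  have zq: "\<phi> q = 0" if "q \<in> \<rat>" for q
  proof -
    obtain a b where ab: "b > 0" "q = of_int a / of_int b"
      using \<open>q \<in> \<rat>\<close> by (auto elim!: Rats_cases')
    have "\<phi> (of_int b * q) = of_int b *\<^sub>R \<phi> q" by (rule pint)
    moreover have "of_int b * q = of_int a * 1" using ab by simp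
    ultimately have "of_int b *\<^sub>R \<phi> q = 0" using pint[of a 1] p1 by simp
    then show ?thesis using ab by simp
  qed
  have cp: "continuous_on UNIV \<phi>"
    unfolding \<phi>_def by (intro continuous_intros cont)
  have "\<phi> t = 0"
    using continuous_constant_on_closure[of "\<rat>" \<phi> 0 t] cp zq Rats_closure_real by auto
  then show ?thesis by (simp add: \<phi>_def)
qed


lemma pow_rho:
  fixes p :: real
  shows "(2::real)^n * (inverse (2^n)) powr p = (2 powr (1 - p))^n"
proof -
  have e1: "(2::real)^n = 2 powr (real n)" by (simp add: powr_realpow)
  have "(inverse ((2::real)^n)) powr p = inverse (2 powr (real n * p))"
    by (simp add: inverse_powr e1 powr_powr)
  also have "\<dots> = 2 powr (- (real n * p))" by (simp add: powr_minus)
  finally have "(2::real)^n * (inverse (2^n)) powr p = 2 powr (real n + - (real n * p))"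
    by (simp add: e1 powr_add[symmetric])
  also have "\<dots> = 2 powr ((1 - p) * real n)" by (simp add: algebra_simps)
  also have "\<dots> = (2 powr (1 - p))^n"
    by (simp add: powr_powr[symmetric] powr_realpow)
  finally show ?thesis .
qed


lemma core:
  fixes h :: "'a::real_normed_vector \<Rightarrow> 'b::banach" and K p :: real
  assumes p: "1 < p" and K: "0 \<le> K"
    and h0: "h 0 = 0"
    and hlim: "(h \<longlongrightarrow> 0) (at 0)"
    and A: "\<And>a y. norm (h (a + y) - h a - h y) \<le> K * (norm a + norm y) powr p"
  shows "\<exists>L. linear L \<and> (\<forall>w. norm (h w - L w) \<le> K / (1 - 2 powr (1 - p)) * norm w powr p)"
proof -
  define \<rho> where "\<rho> = (2::real) powr (1 - p)"
  have \<rho>0: "0 < \<rho>" by (simp add: \<rho>_def)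
  have \<rho>1: "\<rho> < 1" unfolding \<rho>_def using p
    by (metis diff_less_0_iff_less powr_less_one one_less_numeral_iff semiring_norm(76))
  define q where "q n v = (2^n) *\<^sub>R h (inverse (2^n) *\<^sub>R v)" for n v
  define D where "D n v = q (Suc n) v - q n v" for n v
  have sc: "2^n * (K * (inverse (2^n) * X) powr p) = K * X powr p * \<rho>^n" if "X \<ge> 0" for n X
  proof -
    have "2^n * (K * (inverse (2^n) * X) powr p) = K * X powr p * (2^n * (inverse (2^n)) powr p)"
      using that by (simp add: powr_mult)
    also have "\<dots> = K * X powr p * \<rho>^n" by (simp add: pow_rho \<rho>_def)
    finally show ?thesis .
  qed
  have qd: "norm (D n v) \<le> K * norm v powr p * \<rho>^n" for n v
  proof -
    define u where "u = inverse (2^Suc n) *\<^sub>R v"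
    have e: "inverse (2^n) *\<^sub>R v = u + u" 
      unfolding u_def scaleR_add_left[symmetric] by simp
    have e2: "q (Suc n) v = 2^n *\<^sub>R (h u + h u)"
      unfolding q_def u_def by (simp add: scaleR_2[symmetric] mult.commute)
    have "D n v = - (2^n *\<^sub>R (h (u + u) - h u - h u))"
      unfolding D_def e2 unfolding q_def e by (simp add: algebra_simps)
    then have "norm (D n v) = 2^n * norm (h (u + u) - h u - h u)" by simp
    also have "\<dots> \<le> 2^n * (K * (norm u + norm u) powr p)"
      by (intro mult_left_mono A) simp
    also have "norm u + norm u = inverse (2^n) * norm v"
      by (simp add: u_def)
    also have "2^n * (K * (inverse (2^n) * norm v) powr p) = K * norm v powr p * \<rho>^n"
      by (rule sc) simp
    finally show ?thesis .
  qed
  have sD: "summable (\<lambda>n. D n v)" for v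
    by (rule summable_comparison_test[of _ "\<lambda>n. K * norm v powr p * \<rho>^n"])
      (use qd \<rho>0 \<rho>1 in \<open>auto intro!: summable_mult summable_geometric\<close>)
  define L where "L v = h v + suminf (\<lambda>n. D n v)" for v
  have qL: "(\<lambda>n. q n v) \<longlonglongrightarrow> L v" for v
  proof -
    have "q n v = h v + (\<Sum>i<n. D i v)" for n
    proof -
      have "(\<Sum>i<n. D i v) = q n v - q 0 v"
        unfolding D_def by (rule sum_lessThan_telescope)
      then show ?thesis by (simp add: q_def)
    qed
    then show ?thesis unfolding L_def
      using tendsto_add[OF tendsto_const summable_LIMSEQ[OF sD]] by presburger
  qed
  have bnd: "norm (h w - L w) \<le> K / (1 - 2 powr (1 - p)) * norm w powr p" for w
  proof -
    have "norm (h w - L w) = norm (suminf (\<lambda>n. D n w))" by (simp add: L_def)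
    also have "\<dots> \<le> suminf (\<lambda>n. K * norm w powr p * \<rho>^n)"
      by (rule norm_suminf_le) (use qd \<rho>0 \<rho>1 in \<open>auto intro!: summable_mult summable_geometric\<close>)
    also have "\<dots> = K * norm w powr p * (1 / (1 - \<rho>))"
      using suminf_mult[of "\<lambda>n. \<rho>^n" "K * norm w powr p"] \<rho>0 \<rho>1
      by (simp add: suminf_geometric summable_geometric)
    finally show ?thesis by (simp add: \<rho>_def)
  qed
  have Ladd: "L (a + y) = L a + L y" for a y
  proof -
    have t1: "(\<lambda>n. q n (a + y) - q n a - q n y) \<longlonglongrightarrow> L (a + y) - L a - L y"
      by (intro tendsto_diff qL)
    have t2: "(\<lambda>n. q n (a + y) - q n a - q n y) \<longlonglongrightarrow> 0"
    proof (rule Lim_null_comparison)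
      show "\<forall>\<^sub>F n in sequentially. norm (q n (a + y) - q n a - q n y) \<le> K * (norm a + norm y) powr p * \<rho>^n"
      proof (intro always_eventually allI)
        fix n
        have "norm (q n (a + y) - q n a - q n y) = 2^n * norm (h (inverse (2^n) *\<^sub>R a + inverse (2^n) *\<^sub>R y) - h (inverse (2^n) *\<^sub>R a) - h (inverse (2^n) *\<^sub>R y))"
          unfolding q_def scaleR_add_right scaleR_diff_right[symmetric] by simp
        also have "\<dots> \<le> 2^n * (K * (norm (inverse (2^n) *\<^sub>R a) + norm (inverse (2^n) *\<^sub>R y)) powr p)"
          by (intro mult_left_mono A) simp
        also have "norm (inverse (2^n) *\<^sub>R a) + norm (inverse (2^n) *\<^sub>R y) = inverse (2^n) * (norm a + norm y)"
          by (simp add: algebra_simps)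
        also have "2^n * (K * (inverse (2^n) * (norm a + norm y)) powr p) = K * (norm a + norm y) powr p * \<rho>^n"
          by (rule sc) simp
        finally show "norm (q n (a + y) - q n a - q n y) \<le> K * (norm a + norm y) powr p * \<rho>^n" .
      qed
      show "(\<lambda>n. K * (norm a + norm y) powr p * \<rho>^n) \<longlonglongrightarrow> 0"
        using \<rho>0 \<rho>1 by (intro tendsto_mult_right_zero LIMSEQ_realpow_zero) auto
    qed
    have "L (a + y) - L a - L y = 0" using LIMSEQ_unique[OF t1 t2] .
    then show ?thesis by (simp add: algebra_simps)
  qed
  have L0: "L 0 = 0" using Ladd[of 0 0] by simp
  have Lc0: "(L \<longlongrightarrow> 0) (at 0)"
  proof (rule Lim_null_comparison)
    show "\<forall>\<^sub>F w in at 0. norm (L w) \<le> norm (h w) + K / (1 - 2 powr (1 - p)) * norm w powr p"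
      using bnd by (intro always_eventually allI) (metis norm_triangle_sub order_trans add_left_mono norm_minus_commute)
    have np: "((\<lambda>w. norm w powr p) \<longlongrightarrow> 0) (at 0)"
      using p by (intro tendsto_zero_powrI tendsto_norm_zero tendsto_ident_at) auto
    show "((\<lambda>w. norm (h w) + K / (1 - 2 powr (1 - p)) * norm w powr p) \<longlongrightarrow> 0) (at 0)"
      using tendsto_add[OF tendsto_norm_zero[OF hlim] tendsto_mult_right_zero[OF np, of "K / (1 - 2 powr (1 - p))"]] by simp
  qed
  have Lcont: "continuous_on UNIV L"
  proof -
    have "isCont L x" for x
    proof -
      have "((\<lambda>d. L (x + d)) \<longlongrightarrow> L x) (at 0)"
        using tendsto_add[OF tendsto_const Lc0, of "L x"] by (simp add: Ladd)
      then show ?thesis unfolding isCont_def by (rule LIM_offset_zero_cancel)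
    qed
    then show ?thesis by (simp add: continuous_on_eq_continuous_at)
  qed
  have Lhom: "L (c *\<^sub>R v) = c *\<^sub>R L v" for c v
  proof -
    have "(\<lambda>t. L (t *\<^sub>R v)) c = c *\<^sub>R (\<lambda>t. L (t *\<^sub>R v)) 1"
    proof (rule cauchy_real)
      show "L ((s + t) *\<^sub>R v) = L (s *\<^sub>R v) + L (t *\<^sub>R v)" for s t
        by (simp add: scaleR_add_left Ladd)
      show "continuous_on UNIV (\<lambda>t. L (t *\<^sub>R v))"
        by (rule continuous_on_compose2[OF Lcont]) (auto intro!: continuous_intros)
    qed
    then show ?thesis by simp
  qed
  have "linear L" by (rule linearI) (auto simp: Ladd Lhom)
  then show ?thesis using bnd by blast
qed


lemma symm_key:
  fixes F :: "'a::euclidean_space \<Rightarrow> real" and G :: "'a \<Rightarrow> 'a" and L :: "'a \<Rightarrow> 'a"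
  assumes lin: "linear L" and p: "1 < p" and c: "0 \<le> c"
    and dF: "\<And>w. (F has_derivative (\<lambda>d. G w \<bullet> d)) (at w)"
    and E: "\<And>w. norm (G w - G 0 - L w) \<le> c * norm w powr p"
  shows "\<bar>F (y + z) - F y - F z + F 0 - L z \<bullet> y\<bar> \<le> 2 * c * (norm y + norm z) powr p * norm y"
proof -
  define f' where "f' s = (\<lambda>t. G (s *\<^sub>R y + z) \<bullet> (t *\<^sub>R y) - G (s *\<^sub>R y) \<bullet> (t *\<^sub>R y))" for s
  have der: "((\<lambda>s. F (s *\<^sub>R y + z) - F (s *\<^sub>R y)) has_derivative f' s) (at s within {0..1})" for s
  proof -
    have i1: "((\<lambda>s. s *\<^sub>R y + z) has_derivative (\<lambda>t. t *\<^sub>R y)) (at s)"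
      by (auto intro!: derivative_eq_intros)
    have i2: "((\<lambda>s. s *\<^sub>R y) has_derivative (\<lambda>t. t *\<^sub>R y)) (at s)"
      by (auto intro!: derivative_eq_intros)
    have "((\<lambda>s. F (s *\<^sub>R y + z) - F (s *\<^sub>R y)) has_derivative f' s) (at s)"
      unfolding f'_def
      by (intro has_derivative_diff has_derivative_compose[OF i1 dF] has_derivative_compose[OF i2 dF])
    then show ?thesis by (rule has_derivative_at_withinI)
  qed
  obtain \<theta> where th: "\<theta> \<in> {0..1}"
    and mv: "F (1 *\<^sub>R y + z) - F (1 *\<^sub>R y) - (F (0 *\<^sub>R y + z) - F (0 *\<^sub>R y)) = f' \<theta> (1 - 0)"
    using mvt_very_simple[OF zero_le_one der] by blast
  define E1 where "E1 = G (\<theta> *\<^sub>R y + z) - G 0 - L (\<theta> *\<^sub>R y + z)"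
  define E2 where "E2 = G (\<theta> *\<^sub>R y) - G 0 - L (\<theta> *\<^sub>R y)"
  have "G (\<theta> *\<^sub>R y + z) - G (\<theta> *\<^sub>R y) = L z + (E1 - E2)"
    unfolding E1_def E2_def using linear_add[OF lin, of "\<theta> *\<^sub>R y" z] by (simp add: algebra_simps)
  then have "F (y + z) - F y - F z + F 0 - L z \<bullet> y = (E1 - E2) \<bullet> y"
    using mv by (simp add: f'_def inner_diff_left[symmetric] inner_add_left)
  then have "\<bar>F (y + z) - F y - F z + F 0 - L z \<bullet> y\<bar> \<le> norm (E1 - E2) * norm y"
    by (simp add: Cauchy_Schwarz_ineq2)
  also have "\<dots> \<le> (norm E1 + norm E2) * norm y"
    by (intro mult_right_mono norm_triangle_ineq4) simp
  also have "\<dots> \<le> (c * (norm y + norm z) powr p + c * (norm y + norm z) powr p) * norm y"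
  proof (intro mult_right_mono add_mono)
    have n1: "norm (\<theta> *\<^sub>R y) \<le> norm y" using th by (simp add: mult_left_le_one_le)
    have n2: "norm (\<theta> *\<^sub>R y + z) \<le> norm y + norm z"
      using n1 norm_triangle_ineq[of "\<theta> *\<^sub>R y" z] by linarith
    show "norm E1 \<le> c * (norm y + norm z) powr p"
      unfolding E1_def using E[of "\<theta> *\<^sub>R y + z"] powr_mono2[OF _ _ n2, of p] p c
      by (smt (verit, ccfv_SIG) mult_left_mono norm_ge_zero)
    have n3: "norm (\<theta> *\<^sub>R y) \<le> norm y + norm z" using n1 by (smt (verit) norm_ge_zero)
    show "norm E2 \<le> c * (norm y + norm z) powr p"
      unfolding E2_def using E[of "\<theta> *\<^sub>R y"] powr_mono2[OF _ _ n3, of p] p c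
      by (smt (verit, ccfv_SIG) mult_left_mono norm_ge_zero)
  qed simp_all
  finally show ?thesis by simp
qed

lemma symm:
  fixes F :: "'a::euclidean_space \<Rightarrow> real" and G :: "'a \<Rightarrow> 'a" and L :: "'a \<Rightarrow> 'a"
  assumes lin: "linear L" and p: "1 < p" and c: "0 \<le> c"
    and dF: "\<And>w. (F has_derivative (\<lambda>d. G w \<bullet> d)) (at w)"
    and E: "\<And>w. norm (G w - G 0 - L w) \<le> c * norm w powr p"
  shows "L u \<bullet> w = L w \<bullet> u"
proof -
  define S where "S = norm u + norm w"
  have S0: "S \<ge> 0" by (simp add: S_def)
  have bnd: "\<bar>L w \<bullet> u - L u \<bullet> w\<bar> \<le> 2 * c * S powr p * S * t powr (p - 1)" if t: "t > 0" for t
  proof -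
    note k1 = symm_key[OF lin p c dF E, of "t *\<^sub>R u" "t *\<^sub>R w"]
    note k2 = symm_key[OF lin p c dF E, of "t *\<^sub>R w" "t *\<^sub>R u"]
    have l1: "L (t *\<^sub>R w) \<bullet> (t *\<^sub>R u) = t^2 * (L w \<bullet> u)"
      by (simp add: linear_scale[OF lin] power2_eq_square)
    have l2: "L (t *\<^sub>R u) \<bullet> (t *\<^sub>R w) = t^2 * (L u \<bullet> w)"
      by (simp add: linear_scale[OF lin] power2_eq_square)
    have ns: "norm (t *\<^sub>R u) + norm (t *\<^sub>R w) = t * S" using t by (simp add: S_def algebra_simps)
    have ns': "norm (t *\<^sub>R w) + norm (t *\<^sub>R u) = t * S" using ns by simp
    have "\<bar>t^2 * (L w \<bullet> u) - t^2 * (L u \<bullet> w)\<bar> \<le> 2 * c * (t * S) powr p * (norm (t *\<^sub>R u) + norm (t *\<^sub>R w))"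
    proof -
      have "\<bar>t^2 * (L w \<bullet> u) - t^2 * (L u \<bullet> w)\<bar> \<le> 2 * c * (t * S) powr p * norm (t *\<^sub>R u) + 2 * c * (t * S) powr p * norm (t *\<^sub>R w)"
        using k1 k2 unfolding l1 l2 ns ns' add.commute[of "t *\<^sub>R w" "t *\<^sub>R u"] by linarith
      then show ?thesis by (simp add: algebra_simps)
    qed
    also have "\<dots> = 2 * c * S powr p * S * t powr (p - 1) * t^2"
    proof -
      have "t powr p = t powr (p - 1) * t" using t by (simp add: powr_diff)
      then show ?thesis using t S0 unfolding ns by (simp add: powr_mult power2_eq_square algebra_simps)
    qed
    finally have "t^2 * \<bar>L w \<bullet> u - L u \<bullet> w\<bar> \<le> (2 * c * S powr p * S * t powr (p - 1)) * t^2"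
      by (simp add: abs_mult right_diff_distrib[symmetric])
    then show ?thesis using t by (simp add: mult.commute)
  qed
  have "\<bar>L w \<bullet> u - L u \<bullet> w\<bar> \<le> 0"
  proof (rule tendsto_le[of "at_right 0"])
    show "((\<lambda>t. 2 * c * S powr p * S * t powr (p - 1)) \<longlongrightarrow> 0) (at_right 0)"
      using p by (intro tendsto_mult_right_zero tendsto_zero_powrI tendsto_ident_at) (auto simp: eventually_at_right_less eventually_at_filter)
    show "\<forall>\<^sub>F t in at_right 0. \<bar>L w \<bullet> u - L u \<bullet> w\<bar> \<le> 2 * c * S powr p * S * t powr (p - 1)"
      using bnd eventually_at_right_less[of 0] by (auto elim!: eventually_mono)
  qed auto
  then show ?thesis by simp
qed


lemma main_est:
  fixes f :: "real^'n \<Rightarrow> real" and g :: "real^'n \<Rightarrow> real^'n" and x' :: "real^'n"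
  assumes p: "1 < p" and K: "0 \<le> K"
    and df: "\<And>x. (f has_derivative (\<lambda>h. g x \<bullet> h)) (at x)"
    and hol: "holder_continuous \<alpha> g" and a0: "0 < \<alpha>"
    and H: "\<And>l y x. 0 < l \<Longrightarrow> norm y \<le> l \<Longrightarrow> x \<in> ball x' l \<Longrightarrow>
              norm (delta y g x - delta y g x') \<le> 2 * K * l powr p"
  shows "\<exists>B. transpose B = B \<and> (\<forall>w. norm (g (x' + w) - g x' - B *v w) \<le> 2 * K / (1 - 2 powr (1 - p)) * norm w powr p)"
proof -
  define h where "h w = g (x' + w) - g x'" for w
  have h0: "h 0 = 0" by (simp add: h_def)
  obtain M where M: "\<And>x y. norm (g x - g y) \<le> M * norm (x - y) powr \<alpha>"
    using hol unfolding holder_continuous_def by blast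
  have hlim: "(h \<longlongrightarrow> 0) (at 0)"
  proof (rule Lim_null_comparison)
    show "\<forall>\<^sub>F w in at 0. norm (h w) \<le> M * norm w powr \<alpha>"
      using M[of "x' + _" x'] by (intro always_eventually allI) (simp add: h_def)
    have na: "((\<lambda>w. norm w powr \<alpha>) \<longlongrightarrow> 0) (at (0::real^'n))"
      using a0 by (intro tendsto_zero_powrI tendsto_norm_zero tendsto_ident_at) auto
    show "((\<lambda>w. M * norm w powr \<alpha>) \<longlongrightarrow> 0) (at (0::real^'n))"
      using tendsto_mult_right_zero[OF na, of M] by simp
  qed
  have A: "norm (h (a + y) - h a - h y) \<le> (2 * K) * (norm a + norm y) powr p" for a y
  proof (cases "y = 0")
    case True then show ?thesis using h0 K by simp
  next
    case False
    define l where "l = norm a + norm y"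
    have l: "0 < l" "norm y \<le> l" "x' + a \<in> ball x' l"
      using False by (auto simp: l_def dist_norm add_nonneg_pos)
    have "delta y g (x' + a) - delta y g x' = h (a + y) - h a - h y"
      by (simp add: delta_def h_def algebra_simps)
    then show ?thesis using H[OF l] by (simp add: l_def)
  qed
  obtain L where L: "linear L" and bnd: "\<And>w. norm (h w - L w) \<le> 2 * K / (1 - 2 powr (1 - p)) * norm w powr p"
    using core[OF p _ h0 hlim A] K by auto
  have \<rho>1: "(2::real) powr (1 - p) < 1" using p
    by (metis diff_less_0_iff_less powr_less_one one_less_numeral_iff semiring_norm(76))
  have c0: "0 \<le> 2 * K / (1 - 2 powr (1 - p))" using K \<rho>1 by simp
  have dF: "((\<lambda>w. f (x' + w)) has_derivative (\<lambda>d. g (x' + w) \<bullet> d)) (at w)" for w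
  proof -
    have "((\<lambda>w. x' + w) has_derivative (\<lambda>d. d)) (at w)" by (auto intro!: derivative_eq_intros)
    from has_derivative_compose[OF this df] show ?thesis .
  qed
  have sy: "L u \<bullet> v = L v \<bullet> u" for u v
    by (rule symm[OF L p c0 dF]) (use bnd in \<open>simp add: h_def\<close>)
  define B where "B = matrix L"
  have Bw: "B *v w = L w" for w
    using matrix_vector_mul(2)[OF L] unfolding B_def by metis
  have ax: "L (axis i 1) $ j = L (axis j 1) $ i" for i j
  proof -
    have "L (axis i 1) $ j = L (axis i 1) \<bullet> axis j 1" by (simp add: inner_axis)
    also have "\<dots> = L (axis j 1) \<bullet> axis i 1" by (rule sy)
    also have "\<dots> = L (axis j 1) $ i" by (simp add: inner_axis)
    finally show ?thesis .
  qed
  have "transpose B = B"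
    unfolding B_def transpose_def matrix_def vec_eq_iff
    using ax by simp
  then show ?thesis using bnd by (auto simp: Bw h_def)
qed


lemma reduce_top:
  fixes R X :: ennreal
  assumes C0: "0 < C" and main: "\<And>K. 0 \<le> K \<Longrightarrow> R = ennreal K \<Longrightarrow> X \<le> ennreal C * ennreal K"
  shows "X \<le> ennreal C * R"
proof (cases R)
  case (real r) then show ?thesis using main by simp
next
  case top then show ?thesis using C0 by (simp add: ennreal_mult_top)
qed

theorem proposition1:
  fixes \<alpha> :: real
  assumes "1/2 < \<alpha>" and "\<alpha> < 1"
  shows "\<exists>C>0. \<forall>(f :: real^'n \<Rightarrow> real) (g :: real^'n \<Rightarrow> real^'n) (x' :: real^'n).
           (\<forall>x. (f has_derivative (\<lambda>h. g x \<bullet> h)) (at x)) \<and> holder_continuous \<alpha> g \<longrightarrow>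
           (SUP r\<in>{0<..}. ennreal (1 / r powr (2*\<alpha>)) *
              (INF B\<in>{B :: real^'n^'n. transpose B = B}. INF b :: real^'n.
                 supnorm_ball (\<lambda>x. g x - (B *v (x - x') + b)) x' r))
           \<le> ennreal C *
             (SUP l\<in>{0<..}. ennreal (1 / l powr (2*\<alpha>)) *
              (SUP y\<in>{y :: real^'n. norm y \<le> l}. INF k :: real^'n.
                 supnorm_ball (\<lambda>x. delta y g x - k) x' l))"
proof -
  have p: "1 < 2 * \<alpha>" using assms by simp
  have a0: "0 < \<alpha>" using assms by simp
  have \<rho>1: "(2::real) powr (1 - 2 * \<alpha>) < 1" using p
    by (metis diff_less_0_iff_less powr_less_one one_less_numeral_iff semiring_norm(76))
  define C where "C = 2 / (1 - 2 powr (1 - 2 * \<alpha>))"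
  have C0: "0 < C" using \<rho>1 by (simp add: C_def)
  show ?thesis
  proof (intro exI[of _ C] conjI C0 allI impI)
    fix f :: "real^'n \<Rightarrow> real" and g :: "real^'n \<Rightarrow> real^'n" and x' :: "real^'n"
    assume asm: "(\<forall>x. (f has_derivative (\<lambda>h. g x \<bullet> h)) (at x)) \<and> holder_continuous \<alpha> g"
    show "(SUP r\<in>{0<..}. ennreal (1 / r powr (2*\<alpha>)) *
              (INF B\<in>{B :: real^'n^'n. transpose B = B}. INF b :: real^'n.
                 supnorm_ball (\<lambda>x. g x - (B *v (x - x') + b)) x' r))
           \<le> ennreal C *
             (SUP l\<in>{0<..}. ennreal (1 / l powr (2*\<alpha>)) *
              (SUP y\<in>{y :: real^'n. norm y \<le> l}. INF k :: real^'n.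
                 supnorm_ball (\<lambda>x. delta y g x - k) x' l))"
    proof (rule reduce_top[OF C0])
      fix K :: real
      assume K: "0 \<le> K" and R: "(SUP l\<in>{0<..}. ennreal (1 / l powr (2*\<alpha>)) *
              (SUP y\<in>{y :: real^'n. norm y \<le> l}. INF k :: real^'n.
                 supnorm_ball (\<lambda>x. delta y g x - k) x' l)) = ennreal K"
      have I: "(INF k. supnorm_ball (\<lambda>x. delta y g x - k) x' l) \<le> ennreal (K * l powr (2*\<alpha>))"
        if l: "0 < l" "norm y \<le> l" for l y
      proof -
        define J where "J = (INF k. supnorm_ball (\<lambda>x. delta y g x - k) x' l)"
        have "ennreal (1 / l powr (2*\<alpha>)) * (SUP y\<in>{y :: real^'n. norm y \<le> l}. INF k :: real^'n.
                 supnorm_ball (\<lambda>x. delta y g x - k) x' l) \<le> ennreal K"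
          unfolding R[symmetric] using l by (intro SUP_upper) auto
        moreover have "J \<le> (SUP y\<in>{y :: real^'n. norm y \<le> l}. INF k :: real^'n.
                 supnorm_ball (\<lambda>x. delta y g x - k) x' l)"
          unfolding J_def using l by (intro SUP_upper) auto
        ultimately have "ennreal (1 / l powr (2*\<alpha>)) * J \<le> ennreal K"
          by (meson mult_left_mono order_trans zero_le)
        then have "ennreal (l powr (2*\<alpha>)) * (ennreal (1 / l powr (2*\<alpha>)) * J) \<le> ennreal (l powr (2*\<alpha>)) * ennreal K"
          by (rule mult_left_mono) simp
        moreover have "ennreal (l powr (2*\<alpha>)) * ennreal (1 / l powr (2*\<alpha>)) = 1"
          using l by (simp add: ennreal_mult[symmetric])
        ultimately have "J \<le> ennreal (l powr (2*\<alpha>)) * ennreal K"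
          by (simp add: mult.assoc[symmetric])
        then show ?thesis unfolding J_def using K by (simp add: ennreal_mult[symmetric] mult.commute)
      qed
      have H: "norm (delta y g x - delta y g x') \<le> 2 * K * l powr (2*\<alpha>)"
        if l: "0 < l" "norm y \<le> l" "x \<in> ball x' l" for l y x
      proof (rule field_le_epsilon)
        fix e :: real assume e: "0 < e"
        have "(INF k. supnorm_ball (\<lambda>x. delta y g x - k) x' l) < ennreal (K * l powr (2*\<alpha>) + e/2)"
          using I[OF l(1,2)] e K by (smt (verit) ennreal_less_iff half_gt_zero order.strict_trans1 powr_ge_zero zero_le_mult_iff)
        then obtain k where k: "supnorm_ball (\<lambda>x. delta y g x - k) x' l < ennreal (K * l powr (2*\<alpha>) + e/2)"
          by (auto simp: INF_less_iff)
        have pt: "norm (delta y g z - k) < K * l powr (2*\<alpha>) + e/2" if "z \<in> ball x' l" for z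
        proof -
          have "ennreal (norm (delta y g z - k)) \<le> supnorm_ball (\<lambda>x. delta y g x - k) x' l"
            unfolding supnorm_ball_def using that by (intro SUP_upper)
          then have "ennreal (norm (delta y g z - k)) < ennreal (K * l powr (2*\<alpha>) + e/2)"
            using k by simp
          then show ?thesis by (simp add: ennreal_less_iff)
        qed
        have "norm (delta y g x - delta y g x') \<le> norm (delta y g x - k) + norm (delta y g x' - k)"
          by (metis norm_triangle_ineq4 diff_diff_eq2 add_diff_cancel_left' norm_minus_commute diff_add_cancel
              norm_diff_triangle_ineq order_refl)
        also have "\<dots> \<le> 2 * K * l powr (2*\<alpha>) + e"
          using pt[OF l(3)] pt[of x'] l(1) by simp
        finally show "norm (delta y g x - delta y g x') \<le> 2 * K * l powr (2*\<alpha>) + e" .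
      qed
      obtain B where Bs: "transpose B = B"
        and Bb: "\<And>w. norm (g (x' + w) - g x' - B *v w) \<le> 2 * K / (1 - 2 powr (1 - 2*\<alpha>)) * norm w powr (2*\<alpha>)"
        using main_est[OF p K _ _ a0 H] asm by blast
      have CK: "2 * K / (1 - 2 powr (1 - 2*\<alpha>)) = C * K" by (simp add: C_def)
      show "(SUP r\<in>{0<..}. ennreal (1 / r powr (2*\<alpha>)) *
              (INF B\<in>{B :: real^'n^'n. transpose B = B}. INF b :: real^'n.
                 supnorm_ball (\<lambda>x. g x - (B *v (x - x') + b)) x' r)) \<le> ennreal C * ennreal K"
      proof (rule SUP_least)
        fix r :: real assume r: "r \<in> {0<..}"
        have "(INF B\<in>{B :: real^'n^'n. transpose B = B}. INF b :: real^'n.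
                 supnorm_ball (\<lambda>x. g x - (B *v (x - x') + b)) x' r)
              \<le> supnorm_ball (\<lambda>x. g x - (B *v (x - x') + g x')) x' r"
          using Bs by (intro INF_lower2[of B] INF_lower) auto
        also have "\<dots> \<le> ennreal (C * K * r powr (2*\<alpha>))"
          unfolding supnorm_ball_def
        proof (rule SUP_least)
          fix z assume z: "z \<in> ball x' r"
          have "norm (g z - (B *v (z - x') + g x')) = norm (g (x' + (z - x')) - g x' - B *v (z - x'))"
            by (simp add: algebra_simps)
          also have "\<dots> \<le> C * K * norm (z - x') powr (2*\<alpha>)" using Bb[of "z - x'"] CK by simp
          also have "\<dots> \<le> C * K * r powr (2*\<alpha>)"
            using z C0 K a0 by (intro mult_left_mono powr_mono2) (auto simp: dist_norm norm_minus_commute)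
          finally show "ennreal (norm (g z - (B *v (z - x') + g x'))) \<le> ennreal (C * K * r powr (2*\<alpha>))"
            by (rule ennreal_leI)
        qed
        finally have "ennreal (1 / r powr (2*\<alpha>)) * (INF B\<in>{B :: real^'n^'n. transpose B = B}. INF b :: real^'n.
                 supnorm_ball (\<lambda>x. g x - (B *v (x - x') + b)) x' r)
              \<le> ennreal (1 / r powr (2*\<alpha>)) * ennreal (C * K * r powr (2*\<alpha>))"
          by (rule mult_left_mono) simp
        also have "\<dots> = ennreal C * ennreal K"
          using r C0 K by (simp add: ennreal_mult[symmetric])
        finally show "ennreal (1 / r powr (2*\<alpha>)) * (INF B\<in>{B :: real^'n^'n. transpose B = B}. INF b :: real^'n.
                 supnorm_ball (\<lambda>x. g x - (B *v (x - x') + b)) x' r) \<le> ennreal C * ennreal K" .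
      qed
    qed
  qed
qed

end
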